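(* Under the hypotheses of the context (in particular $A$ is $(c_A,\gamma_{sys})$-SED, $B$ is $(c_B,\gamma_{sys})$-SED with $c_A,c_B\ge1$, $K\in\mathcal{K}^\kappa$ is $(c_K,\gamma_{sys})$-SED and $A+BK$ is $(\tau,\rho)$-stable), let $P_i$ solve $P_i = S_i + [K]_{i:}^\top [R]_{ii}[K]_{i:} + (A+BK)^\top P_i (A+BK)$ and define $$H_{i11}=S_i + A^\top P_i A,\quad H_{i12}=A^\top P_i B,\quad H_{i22}=R_i + B^\top P_i B.$$ Then each of $H_{i11}$, $H_{i12}$, $H_{i22}$ is $(c_{H_i},\gamma_{P_i})$-SED away from $i$, where $$c_{H_i}=\max\big(\|S_i\| + N^2 c_A^2 c_{P_i},\; N^2 c_A c_B c_{P_i},\; \|R_i\| + N^2 c_B^2 c_{P_i}\big),$$ with $$c_{P_i} = \frac{\|S_i + [K]_{i:}^\top [R]_{ii}[K]_{i:}\|\,\tau^2}{1-e^{-2\rho}} + 2\big(\|[S]_{ii}\| + \|[R]_{ii}\|c_K^2\big),\qquad \gamma_{P_i} = \frac{\rho\,\gamma_{sys}}{\rho + \ln(N c_A + N^2 c_B c_K)}.$$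
   Context: $\|\cdot\|$ denotes the Euclidean norm / induced $\ell_2$ matrix norm. There are $N$ agents $[N]$ on an undirected graph with graph distance $\mathrm{dist}$ ($\mathrm{dist}(i,i)=0$, symmetric, triangle inequality). Agent $i$ has state dimension $n_i$ and input dimension $m_i$, $n=\sum_i n_i$, $m=\sum_i m_i$; matrices are partitioned into blocks $[X]_{lj}$ (rows of agent $l$, columns of agent $j$, using the $n$- or $m$-partition as appropriate); $[X]_{i:}$ is agent $i$'s block row. $A\in\mathbb{R}^{n\times n}$, $B\in\mathbb{R}^{n\times m}$, $\gamma_{sys}>0$, $\kappa\ge1$, $\mathcal{N}_i^\kappa=\{j:\mathrm{dist}(i,j)<\kappa\}$, $\mathcal{K}^\kappa=\{K\in\mathbb{R}^{m\times n}:[K]_{ij}=0 \text{ if } j\notin\mathcal{N}_i^\kappa\}$. $S$, $R$ are block-diagonal with $[S]_{ii}\succeq0$, $[R]_{ii}\succ0$; $S_i$ (resp. $R_i$) is $S$ (resp. $R$) with all blocks except the $(i,i)$ block set to zero. Definitions: $X$ is $(\tau,\rho)$-stable if $\|X^k\|\le\tau e^{-\rho k}$ for all $k\ge0$; $X$ is $(c,\gamma)$-SED if $\|[X]_{lj}\|\le c e^{-\gamma\,\mathrm{dist}(l,j)}$ for all $l,j$; $X$ is $(c,\gamma)$-SED away from $i$ if $\|[X]_{lj}\|\le c e^{-\gamma\max(\mathrm{dist}(i,l),\mathrm{dist}(i,j))}$ for all $l,j$. *)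

theory Defs
  imports "HOL-Analysis.Analysis"
begin

text \<open>Matrices are HOL-Analysis matrices; coordinates are partitioned among agents
  (type 'a) by an agent-assignment function for the row index type and one for the
  column index type.\<close>

definition opnorm :: "real^'c^'r \<Rightarrow> real" where
  "opnorm X = onorm (\<lambda>x. X *v x)"

primrec matpow :: "real^'n^'n \<Rightarrow> nat \<Rightarrow> real^'n^'n" where
  "matpow X 0 = mat 1"
| "matpow X (Suc k) = X ** matpow X k"

text \<open>Block (l,j) of X, padded with zeros (the zero padding does not change the
  induced 2-norm).\<close>
definition blk :: "('r \<Rightarrow> 'a) \<Rightarrow> ('c \<Rightarrow> 'a) \<Rightarrow> real^'c^'r \<Rightarrow> 'a \<Rightarrow> 'a \<Rightarrow> real^'c^'r" where
  "blk ra ca X l j = (\<chi> r c. if ra r = l \<and> ca c = j then X $ r $ c else 0)"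

definition blkrow :: "('r \<Rightarrow> 'a) \<Rightarrow> real^'c^'r \<Rightarrow> 'a \<Rightarrow> real^'c^'r" where
  "blkrow ra X i = (\<chi> r c. if ra r = i then X $ r $ c else 0)"

definition stable :: "real \<Rightarrow> real \<Rightarrow> real^'n^'n \<Rightarrow> bool" where
  "stable \<tau> \<rho> X \<longleftrightarrow> (\<forall>k::nat. opnorm (matpow X k) \<le> \<tau> * exp (- \<rho> * real k))"

definition SED :: "('a \<Rightarrow> 'a \<Rightarrow> nat) \<Rightarrow> ('r \<Rightarrow> 'a) \<Rightarrow> ('c \<Rightarrow> 'a) \<Rightarrow> real \<Rightarrow> real \<Rightarrow> real^'c^'r \<Rightarrow> bool" where
  "SED d ra ca c \<gamma> X \<longleftrightarrow>
     (\<forall>l j. opnorm (blk ra ca X l j) \<le> c * exp (- \<gamma> * real (d l j)))"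

definition SED_away :: "('a \<Rightarrow> 'a \<Rightarrow> nat) \<Rightarrow> ('r \<Rightarrow> 'a) \<Rightarrow> ('c \<Rightarrow> 'a) \<Rightarrow> 'a \<Rightarrow> real \<Rightarrow> real \<Rightarrow> real^'c^'r \<Rightarrow> bool" where
  "SED_away d ra ca i c \<gamma> X \<longleftrightarrow>
     (\<forall>l j. opnorm (blk ra ca X l j) \<le> c * exp (- \<gamma> * real (max (d i l) (d i j))))"

definition in_Kkappa :: "('a \<Rightarrow> 'a \<Rightarrow> nat) \<Rightarrow> ('m \<Rightarrow> 'a) \<Rightarrow> ('n \<Rightarrow> 'a) \<Rightarrow> nat \<Rightarrow> real^'n^'m \<Rightarrow> bool" where
  "in_Kkappa d agu agx \<kappa> K \<longleftrightarrow> (\<forall>r c. \<kappa> \<le> d (agu r) (agx c) \<longrightarrow> K $ r $ c = 0)"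

definition block_diag :: "('n \<Rightarrow> 'a) \<Rightarrow> real^'n^'n \<Rightarrow> bool" where
  "block_diag ag X \<longleftrightarrow> (\<forall>r c. ag r \<noteq> ag c \<longrightarrow> X $ r $ c = 0)"

definition block_psd :: "('n \<Rightarrow> 'a) \<Rightarrow> real^'n^'n \<Rightarrow> 'a \<Rightarrow> bool" where
  "block_psd ag X i \<longleftrightarrow>
     (\<forall>r c. ag r = i \<and> ag c = i \<longrightarrow> X $ r $ c = X $ c $ r) \<and>
     (\<forall>x. (\<forall>c. ag c \<noteq> i \<longrightarrow> x $ c = 0) \<longrightarrow> 0 \<le> x \<bullet> (X *v x))"

definition block_pd :: "('n \<Rightarrow> 'a) \<Rightarrow> real^'n^'n \<Rightarrow> 'a \<Rightarrow> bool" where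
  "block_pd ag X i \<longleftrightarrow>
     (\<forall>r c. ag r = i \<and> ag c = i \<longrightarrow> X $ r $ c = X $ c $ r) \<and>
     (\<forall>x. (\<forall>c. ag c \<noteq> i \<longrightarrow> x $ c = 0) \<and> x \<noteq> 0 \<longrightarrow> 0 < x \<bullet> (X *v x))"

end

theory Submission
  imports Defs
begin


lemma opnorm_nonneg: "0 \<le> opnorm X"
  unfolding opnorm_def by (rule onorm_pos_le) simp

lemma opnorm_apply: "norm (X *v x) \<le> opnorm X * norm x"
  unfolding opnorm_def by (rule onorm) simp

lemma opnorm_le: assumes "0 \<le> b" "\<And>x. norm (X *v x) \<le> b * norm x" shows "opnorm X \<le> b"
  unfolding opnorm_def by (rule onorm_bound[OF assms])

lemma opnorm_add: "opnorm (X + Y) \<le> opnorm X + opnorm Y"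
proof (rule opnorm_le)
  show "0 \<le> opnorm X + opnorm Y" by (simp add: opnorm_nonneg add_nonneg_nonneg)
  fix x
  have "norm ((X + Y) *v x) \<le> norm (X *v x) + norm (Y *v x)"
    by (simp add: matrix_vector_mult_add_rdistrib norm_triangle_ineq)
  also have "\<dots> \<le> (opnorm X + opnorm Y) * norm x"
    using opnorm_apply[of X x] opnorm_apply[of Y x] by (simp add: distrib_right)
  finally show "norm ((X + Y) *v x) \<le> (opnorm X + opnorm Y) * norm x" .
qed

lemma opnorm_mult: "opnorm (X ** Y) \<le> opnorm X * opnorm Y"
proof (rule opnorm_le)
  show "0 \<le> opnorm X * opnorm Y" by (simp add: opnorm_nonneg)
  fix x
  have "norm ((X ** Y) *v x) = norm (X *v (Y *v x))" by (simp add: matrix_vector_mul_assoc)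
  also have "\<dots> \<le> opnorm X * norm (Y *v x)" by (rule opnorm_apply)
  also have "\<dots> \<le> opnorm X * (opnorm Y * norm x)"
    by (rule mult_left_mono[OF opnorm_apply opnorm_nonneg])
  finally show "norm ((X ** Y) *v x) \<le> opnorm X * opnorm Y * norm x" by (simp add: mult.assoc)
qed

lemma opnorm_zero[simp]: "opnorm (0::real^'c^'r) = 0"
proof -
  have "opnorm (0::real^'c^'r) \<le> 0" by (rule opnorm_le) auto
  thus ?thesis using opnorm_nonneg[of "0::real^'c^'r"] by linarith
qed

lemma opnorm_sum: "finite S \<Longrightarrow> opnorm (sum f S) \<le> (\<Sum>s\<in>S. opnorm (f s))"
proof (induction S rule: finite_induct)
  case empty then show ?case by simp
next
  case (insert x F)
  then show ?case using opnorm_add[of "f x" "sum f F"] by simp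
qed

lemma opnorm_transpose_le: "opnorm (transpose (X::real^'c^'r)) \<le> opnorm X"
proof (rule opnorm_le)
  show "0 \<le> opnorm X" by (rule opnorm_nonneg)
  fix x :: "real^'r"
  let ?y = "transpose X *v x"
  have "norm ?y ^ 2 = ?y \<bullet> ?y" by (simp add: power2_norm_eq_inner)
  also have "?y \<bullet> ?y = x \<bullet> (X *v ?y)"
    by (simp add: dot_lmul_matrix[symmetric])
  also have "\<dots> \<le> norm x * norm (X *v ?y)" by (rule norm_cauchy_schwarz)
  also have "\<dots> \<le> norm x * (opnorm X * norm ?y)"
    by (rule mult_left_mono[OF opnorm_apply norm_ge_zero])
  finally have h: "norm ?y * norm ?y \<le> (opnorm X * norm x) * norm ?y"
    by (simp add: power2_eq_square algebra_simps)
  show "norm ?y \<le> opnorm X * norm x"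
  proof (cases "norm ?y = 0")
    case True then show ?thesis by (simp add: opnorm_nonneg)
  next
    case False then have "norm ?y > 0" by simp
    with h show ?thesis by (simp add: mult_le_cancel_right)
  qed
qed

lemma opnorm_transpose[simp]: "opnorm (transpose X) = opnorm X"
  using opnorm_transpose_le[of X] opnorm_transpose_le[of "transpose X"] by simp

lemma sum_delta_conj:
  "(\<Sum>k\<in>(UNIV::'r::finite set). if k = a \<and> P k then f k else 0) = (if P a then f a else 0)"
proof -
  have h: "(\<lambda>k. if k = a \<and> P k then f k else 0) = (\<lambda>k. if k = a then (if P a then f a else 0) else 0)"
    by auto
  show ?thesis by (simp only: h) simp
qed

lemma sum_delta_conj':
  "(\<Sum>k\<in>(UNIV::'r::finite set). if a = k \<and> P k then f k else 0) = (if P a then f a else 0)"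
  using sum_delta_conj[of a P f] by (simp add: eq_commute)

definition prj :: "('r \<Rightarrow> 'a) \<Rightarrow> 'a \<Rightarrow> real^'r^'r" where
  "prj ag l = (\<chi> r c. if r = c \<and> ag r = l then 1 else 0)"

lemma prj_apply: "prj ag l *v x = (\<chi> r. if ag r = l then x $ r else 0)"
  unfolding prj_def matrix_vector_mult_def
  by (auto simp: vec_eq_iff if_distrib[where f="\<lambda>a. a * _"] sum_delta_conj sum_delta_conj' cong: if_cong)

lemma opnorm_prj: "opnorm (prj ag l) \<le> 1"
proof (rule opnorm_le)
  fix x
  show "norm (prj ag l *v x) \<le> 1 * norm x"
    unfolding prj_apply by simp (rule norm_le_componentwise_cart, simp)
qed simp

lemma transpose_prj[simp]: "transpose (prj ag l) = prj ag l"
  unfolding prj_def transpose_def by (auto simp: vec_eq_iff)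

lemma mult_prj_left: "(prj ag l ** X) = (\<chi> r c. if ag r = l then X $ r $ c else 0)"
  unfolding prj_def matrix_matrix_mult_def
  by (auto simp: vec_eq_iff if_distrib[where f="\<lambda>a. a * _"] sum_delta_conj sum_delta_conj' cong: if_cong)

lemma mult_prj_right: "(X ** prj ag l) = (\<chi> r c. if ag c = l then X $ r $ c else 0)"
  unfolding prj_def matrix_matrix_mult_def
  by (auto simp: vec_eq_iff if_distrib[where f="\<lambda>a. _ * a"] sum_delta_conj sum_delta_conj' cong: if_cong)

lemma prj_prj: "prj ag l ** prj ag j = (if l = j then prj ag l else 0)"
  unfolding mult_prj_left by (auto simp: prj_def vec_eq_iff)

lemma sum_prj: "(\<Sum>p\<in>UNIV. prj (ag::'r::finite \<Rightarrow> 'a::finite) p) = mat 1"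
proof -
  have "(\<Sum>p\<in>UNIV. prj ag p) $ r $ c = mat 1 $ r $ c" for r c
  proof -
    have "(\<Sum>p\<in>UNIV. prj ag p) $ r $ c = (\<Sum>p\<in>UNIV. (if r = c \<and> ag r = p then 1 else 0))"
      by (simp add: sum_component prj_def)
    also have "\<dots> = (if r = c then 1 else 0)" by (auto simp: sum.delta)
    finally show ?thesis by (simp add: mat_def)
  qed
  thus ?thesis by (simp add: vec_eq_iff)
qed

lemma blk_prj: "blk ra ca X l j = prj ra l ** X ** prj ca j"
  unfolding blk_def mult_prj_right mult_prj_left by (auto simp: vec_eq_iff)

lemma blkrow_prj: "blkrow ra X i = prj ra i ** X"
  unfolding blkrow_def mult_prj_left by (auto simp: vec_eq_iff)



lemma matrix_add_rdistrib': "((B + C) ** A) = (B ** A) + (C ** A)"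
  for A B C :: "real^_^_"
  by (vector matrix_matrix_mult_def sum.distrib[symmetric] field_simps)

lemma matrix_sum_left: "finite S \<Longrightarrow> (A::real^_^_) ** sum f S = (\<Sum>s\<in>S. A ** f s)"
  by (induction S rule: finite_induct) (auto simp: matrix_add_ldistrib)

lemma matrix_sum_right: "finite S \<Longrightarrow> sum f S ** (A::real^_^_) = (\<Sum>s\<in>S. f s ** A)"
  by (induction S rule: finite_induct) (auto simp: matrix_add_rdistrib')

lemma transpose_add': "transpose ((X::real^'c^'r) + Y) = transpose X + transpose Y"
  by (simp add: transpose_def vec_eq_iff)

lemma blk_add: "blk ra ca (X + Y) l j = blk ra ca X l j + blk ra ca Y l j"
  unfolding blk_def by (simp add: vec_eq_iff)

lemma blk_diff: "blk ra ca (X - Y) l j = blk ra ca X l j - blk ra ca Y l j"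
  unfolding blk_def by (simp add: vec_eq_iff)

lemma blk_sum: "finite S \<Longrightarrow> blk ra ca (sum f S) l j = (\<Sum>s\<in>S. blk ra ca (f s) l j)"
  by (induction S rule: finite_induct) (auto simp: blk_add blk_def vec_eq_iff)

lemma blk_transpose: "blk ca ra (transpose X) l j = transpose (blk ra ca X j l)"
  unfolding blk_def transpose_def by (simp add: vec_eq_iff)

lemma opnorm_blk: "opnorm (blk ra ca X l j) \<le> opnorm X"
proof -
  have "opnorm (blk ra ca X l j) \<le> opnorm (prj ra l ** X) * opnorm (prj ca j)"
    unfolding blk_prj by (rule opnorm_mult)
  also have "\<dots> \<le> opnorm (prj ra l ** X) * 1"
    by (rule mult_left_mono[OF opnorm_prj opnorm_nonneg])
  also have "\<dots> \<le> opnorm (prj ra l) * opnorm X" by simp (rule opnorm_mult)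
  also have "\<dots> \<le> 1 * opnorm X" by (rule mult_right_mono[OF opnorm_prj opnorm_nonneg])
  finally show ?thesis by simp
qed

lemma prj_idem_assoc: "A ** prj ag p ** prj ag p = A ** prj ag p"
  by (simp add: matrix_mul_assoc[symmetric] prj_prj)

lemma blk_mult:
  fixes X :: "real^'m::finite^'r" and Y :: "real^'c^'m" and mb :: "'m \<Rightarrow> 'a::finite"
  shows "blk ra ca (X ** Y) l j = (\<Sum>p\<in>UNIV. blk ra mb X l p ** blk mb ca Y p j)"
proof -
  have "X ** Y = X ** (\<Sum>p\<in>UNIV. prj mb p) ** Y" by (simp add: sum_prj)
  also have "\<dots> = (\<Sum>p\<in>UNIV. X ** prj mb p ** prj mb p ** Y)"
    by (simp add: matrix_sum_left matrix_sum_right prj_idem_assoc)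
  finally have "prj ra l ** (X ** Y) ** prj ca j
     = (\<Sum>p\<in>UNIV. prj ra l ** (X ** prj mb p ** prj mb p ** Y) ** prj ca j)"
    by (simp add: matrix_sum_left matrix_sum_right)
  thus ?thesis unfolding blk_prj by (simp add: matrix_mul_assoc prj_idem_assoc)
qed

lemma blk_mat1: "blk ag ag (mat 1) l j = (if l = j then prj ag l else 0)"
  unfolding blk_prj by (simp add: prj_prj)

lemma opnorm_blk_mat1: "opnorm (blk ag ag (mat 1) l j) \<le> (if l = j then 1 else 0)"
  by (simp add: blk_mat1 opnorm_prj)



lemma exp_tri:
  assumes tri: "\<And>x y z. d x z \<le> d x y + d y z" and g: "(0::real) \<le> \<gamma>"
  shows "exp (- \<gamma> * real (d l p)) * exp (- \<gamma> * real (d p j)) \<le> exp (- \<gamma> * real (d l j))"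
proof -
  have "real (d l j) \<le> real (d l p) + real (d p j)" using tri[of l j p] by simp
  hence "\<gamma> * real (d l j) \<le> \<gamma> * (real (d l p) + real (d p j))" by (rule mult_left_mono[OF _ g])
  thus ?thesis by (simp add: exp_add[symmetric] algebra_simps)
qed

lemma SED_D: "SED d ra ca c \<gamma> X \<Longrightarrow> opnorm (blk ra ca X l j) \<le> c * exp (- \<gamma> * real (d l j))"
  unfolding SED_def by blast

lemma sum_const_le_card:
  assumes "\<And>p. f p \<le> (c::real)"
  shows "(\<Sum>p\<in>(UNIV::'a::finite set). f p) \<le> real CARD('a) * c"
  using sum_mono[of UNIV f "\<lambda>_. c"] assms by simp

context
  fixes d :: "'a::finite \<Rightarrow> 'a \<Rightarrow> nat"
    and agx :: "'n::finite \<Rightarrow> 'a" and agu :: "'m::finite \<Rightarrow> 'a"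
    and A :: "real^'n^'n" and B :: "real^'m^'n" and K :: "real^'n^'m"
    and \<gamma> cA cB cK :: real
  assumes d_refl: "\<And>x. d x x = 0"
    and tri: "\<And>x y z. d x z \<le> d x y + d y z"
    and g: "0 \<le> \<gamma>"
    and A_SED: "SED d agx agx cA \<gamma> A" and cA: "cA \<ge> 1"
    and B_SED: "SED d agx agu cB \<gamma> B" and cB: "cB \<ge> 0"
    and K_SED: "SED d agu agx cK \<gamma> K" and cK: "cK \<ge> 0"
begin

lemma NN_ge1: "real CARD('a) \<ge> 1" by simp
lemma cM_ge: "cA + real CARD('a) * cB * cK \<ge> 1"
proof -
  have "0 \<le> real CARD('a) * cB * cK" using cB cK by simp
  thus ?thesis using cA by linarith
qed
lemma CC_ge: "real CARD('a) * (cA + real CARD('a) * cB * cK) \<ge> 1"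
  using cM_ge NN_ge1 by (metis le_add_same_cancel2 mult_le_cancel_left1 order_trans zero_le_one
      not_one_le_zero dual_order.trans mult_left_mono mult_1_right)

lemma M_blk:
  "opnorm (blk agx agx (A + B ** K) l j) \<le> (cA + real CARD('a) * cB * cK) * exp (- \<gamma> * real (d l j))"
proof -
  have "opnorm (blk agx agx (A + B ** K) l j)
      \<le> opnorm (blk agx agx A l j) + opnorm (\<Sum>p\<in>UNIV. blk agx agu B l p ** blk agu agx K p j)"
    unfolding blk_add blk_mult[where mb=agu] by (rule opnorm_add)
  also have "\<dots> \<le> cA * exp (- \<gamma> * real (d l j)) + real CARD('a) * (cB * cK * exp (- \<gamma> * real (d l j)))"
  proof (rule add_mono)
    show "opnorm (blk agx agx A l j) \<le> cA * exp (- \<gamma> * real (d l j))" by (rule SED_D[OF A_SED])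
    have "opnorm (\<Sum>p\<in>UNIV. blk agx agu B l p ** blk agu agx K p j)
       \<le> (\<Sum>p\<in>UNIV. opnorm (blk agx agu B l p ** blk agu agx K p j))" by (rule opnorm_sum) simp
    also have "\<dots> \<le> real CARD('a) * (cB * cK * exp (- \<gamma> * real (d l j)))"
    proof (rule sum_const_le_card)
      fix p
      have "opnorm (blk agx agu B l p ** blk agu agx K p j)
          \<le> opnorm (blk agx agu B l p) * opnorm (blk agu agx K p j)" by (rule opnorm_mult)
      also have "\<dots> \<le> (cB * exp (- \<gamma> * real (d l p))) * (cK * exp (- \<gamma> * real (d p j)))"
        by (rule mult_mono[OF SED_D[OF B_SED] SED_D[OF K_SED] _ opnorm_nonneg]) (use cB in simp)
      also have "\<dots> = cB * cK * (exp (- \<gamma> * real (d l p)) * exp (- \<gamma> * real (d p j)))" by simp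
      also have "\<dots> \<le> cB * cK * exp (- \<gamma> * real (d l j))"
        by (rule mult_left_mono[OF exp_tri[OF tri g]]) (use cB cK in simp)
      finally show "opnorm (blk agx agu B l p ** blk agu agx K p j) \<le> cB * cK * exp (- \<gamma> * real (d l j))" .
    qed
    finally show "opnorm (\<Sum>p\<in>UNIV. blk agx agu B l p ** blk agu agx K p j)
       \<le> real CARD('a) * (cB * cK * exp (- \<gamma> * real (d l j)))" .
  qed
  also have "\<dots> = (cA + real CARD('a) * cB * cK) * exp (- \<gamma> * real (d l j))" by (simp add: algebra_simps)
  finally show ?thesis .
qed

lemma Mpow_blk_Suc:
  "opnorm (blk agx agx (matpow (A + B ** K) (Suc k)) l j)
     \<le> (cA + real CARD('a) * cB * cK) * (real CARD('a) * (cA + real CARD('a) * cB * cK)) ^ k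
        * exp (- \<gamma> * real (d l j))"
proof (induction k arbitrary: l j)
  case 0
  then show ?case using M_blk by simp
next
  case (Suc k)
  let ?M = "A + B ** K" and ?cM = "cA + real CARD('a) * cB * cK"
  let ?C = "real CARD('a) * ?cM"
  have "opnorm (blk agx agx (matpow ?M (Suc (Suc k))) l j)
     = opnorm (\<Sum>p\<in>UNIV. blk agx agx ?M l p ** blk agx agx (matpow ?M (Suc k)) p j)"
    by (simp only: matpow.simps(2)[of ?M "Suc k"] blk_mult[where mb=agx])
  also have "\<dots> \<le> (\<Sum>p\<in>UNIV. opnorm (blk agx agx ?M l p ** blk agx agx (matpow ?M (Suc k)) p j))"
    by (rule opnorm_sum) simp
  also have "\<dots> \<le> real CARD('a) * (?cM * (?cM * ?C ^ k) * exp (- \<gamma> * real (d l j)))"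
  proof (rule sum_const_le_card)
    fix p
    have "opnorm (blk agx agx ?M l p ** blk agx agx (matpow ?M (Suc k)) p j)
        \<le> opnorm (blk agx agx ?M l p) * opnorm (blk agx agx (matpow ?M (Suc k)) p j)" by (rule opnorm_mult)
    also have "\<dots> \<le> (?cM * exp (- \<gamma> * real (d l p))) * (?cM * ?C ^ k * exp (- \<gamma> * real (d p j)))"
      by (rule mult_mono[OF M_blk Suc.IH _ opnorm_nonneg]) (use cM_ge in simp)
    also have "\<dots> = ?cM * (?cM * ?C ^ k) * (exp (- \<gamma> * real (d l p)) * exp (- \<gamma> * real (d p j)))"
      by (simp add: algebra_simps)
    also have "\<dots> \<le> ?cM * (?cM * ?C ^ k) * exp (- \<gamma> * real (d l j))"
      by (rule mult_left_mono[OF exp_tri[OF tri g]]) (use cM_ge CC_ge in simp)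
    finally show "opnorm (blk agx agx ?M l p ** blk agx agx (matpow ?M (Suc k)) p j)
        \<le> ?cM * (?cM * ?C ^ k) * exp (- \<gamma> * real (d l j))" .
  qed
  also have "\<dots> = ?cM * ?C ^ Suc k * exp (- \<gamma> * real (d l j))" by (simp add: algebra_simps)
  finally show ?case .
qed

lemma Mpow_blk:
  "opnorm (blk agx agx (matpow (A + B ** K) k) l j)
     \<le> (real CARD('a) * (cA + real CARD('a) * cB * cK)) ^ k * exp (- \<gamma> * real (d l j))"
proof (cases k)
  case 0
  have "(if l = j then 1 else 0) \<le> exp (- \<gamma> * real (d l j))" by (auto simp: d_refl less_imp_le)
  thus ?thesis using opnorm_blk_mat1[of agx l j] by (simp add: 0)
next
  case (Suc k')
  let ?cM = "cA + real CARD('a) * cB * cK"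
  let ?C = "real CARD('a) * ?cM"
  have "?cM * ?C ^ k' * exp (- \<gamma> * real (d l j)) \<le> ?C * ?C ^ k' * exp (- \<gamma> * real (d l j))"
    using cM_ge CC_ge by (intro mult_right_mono) (auto intro!: mult_right_mono)
  thus ?thesis using Mpow_blk_Suc[of k' l j] by (simp add: Suc)
qed

lemma KMpow_blk:
  "opnorm (blk agu agx (K ** matpow (A + B ** K) k) i l)
     \<le> cK * (real CARD('a) * (cA + real CARD('a) * cB * cK)) ^ k * exp (- \<gamma> * real (d i l))"
proof (cases k)
  case 0
  show ?thesis using SED_D[OF K_SED, of i l] by (simp add: 0)
next
  case (Suc k')
  let ?M = "A + B ** K" and ?cM = "cA + real CARD('a) * cB * cK"
  let ?C = "real CARD('a) * ?cM"
  have "opnorm (blk agu agx (K ** matpow ?M (Suc k')) i l)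
     \<le> (\<Sum>p\<in>UNIV. opnorm (blk agu agx K i p ** blk agx agx (matpow ?M (Suc k')) p l))"
    unfolding blk_mult[where mb=agx] by (rule opnorm_sum) simp
  also have "\<dots> \<le> real CARD('a) * (cK * (?cM * ?C ^ k') * exp (- \<gamma> * real (d i l)))"
  proof (rule sum_const_le_card)
    fix p
    have "opnorm (blk agu agx K i p ** blk agx agx (matpow ?M (Suc k')) p l)
        \<le> opnorm (blk agu agx K i p) * opnorm (blk agx agx (matpow ?M (Suc k')) p l)" by (rule opnorm_mult)
    also have "\<dots> \<le> (cK * exp (- \<gamma> * real (d i p))) * (?cM * ?C ^ k' * exp (- \<gamma> * real (d p l)))"
      by (rule mult_mono[OF SED_D[OF K_SED] Mpow_blk_Suc _ opnorm_nonneg]) (use cK in simp)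
    also have "\<dots> = cK * (?cM * ?C ^ k') * (exp (- \<gamma> * real (d i p)) * exp (- \<gamma> * real (d p l)))"
      by (simp add: algebra_simps)
    also have "\<dots> \<le> cK * (?cM * ?C ^ k') * exp (- \<gamma> * real (d i l))"
      by (rule mult_left_mono[OF exp_tri[OF tri g]]) (use cK cM_ge CC_ge in simp)
    finally show "opnorm (blk agu agx K i p ** blk agx agx (matpow ?M (Suc k')) p l)
        \<le> cK * (?cM * ?C ^ k') * exp (- \<gamma> * real (d i l))" .
  qed
  also have "\<dots> = cK * ?C ^ k * exp (- \<gamma> * real (d i l))" by (simp add: algebra_simps Suc)
  finally show ?thesis using Suc by simp
qed

end


lemma geom_tail:
  fixes q :: real assumes "m \<le> n"
  shows "(1 - q) * (\<Sum>k\<in>{m..<n}. q ^ k) = q ^ m - q ^ n"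
  using assms
proof (induction n rule: dec_induct)
  case base then show ?case by simp
next
  case (step n)
  have "(1 - q) * (\<Sum>k\<in>{m..<Suc n}. q ^ k) = (1 - q) * (\<Sum>k\<in>{m..<n}. q ^ k) + (1 - q) * q ^ n"
    using step.hyps by (simp add: distrib_left)
  also have "\<dots> = q ^ m - q ^ n + (1 - q) * q ^ n" using step.IH by simp
  also have "\<dots> = q ^ m - q ^ Suc n" by (simp add: algebra_simps)
  finally show ?case .
qed

lemma geom_tail_le:
  fixes q :: real assumes "0 \<le> q" "q < 1"
  shows "(\<Sum>k\<in>{m..<n}. q ^ k) \<le> q ^ m / (1 - q)"
proof (cases "m \<le> n")
  case True
  have "(1 - q) * (\<Sum>k\<in>{m..<n}. q ^ k) \<le> q ^ m" using geom_tail[OF True, of q] assms by simp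
  thus ?thesis using assms by (simp add: field_simps)
next
  case False thus ?thesis using assms by simp
qed

context
  fixes M P Q :: "real^'n^'n" and \<tau> \<rho> :: real
  assumes lyap: "P = Q + transpose M ** P ** M"
    and stab: "stable \<tau> \<rho> M"
    and rho: "\<rho> > 0"
begin

lemma lyap_iter:
  "P = (\<Sum>k<n. transpose (matpow M k) ** Q ** matpow M k) + transpose (matpow M n) ** P ** matpow M n"
proof (induction n)
  case 0 then show ?case by simp
next
  case (Suc n)
  let ?Mn = "matpow M n"
  have e: "transpose ?Mn ** P ** ?Mn = transpose ?Mn ** (Q + transpose M ** P ** M) ** ?Mn"
    by (rule arg_cong[where f="\<lambda>X. transpose ?Mn ** X ** ?Mn", OF lyap])
  also have "\<dots> = transpose ?Mn ** Q ** ?Mn + transpose (matpow M (Suc n)) ** P ** matpow M (Suc n)"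
    by (simp add: matrix_add_ldistrib matrix_add_rdistrib' matrix_transpose_mul matrix_mul_assoc)
  finally show ?case using Suc.IH by (simp add: add.assoc)
qed

lemma tau_nonneg: "0 \<le> \<tau>"
  using stab opnorm_nonneg[of "mat 1 :: real^'n^'n"] unfolding stable_def
  by (metis matpow.simps(1) mult.commute mult_zero_left of_nat_0 exp_zero mult_1_right order_trans)

lemma Mpow_norm: "opnorm (matpow M k) \<le> \<tau> * exp (- \<rho> * real k)"
  using stab unfolding stable_def by blast

lemma exp_pow: "exp (- 2 * \<rho>) ^ k = exp (- \<rho> * real k) * exp (- \<rho> * real k)"
proof -
  have "exp (- 2 * \<rho>) ^ k = exp (real k * (- 2 * \<rho>))" by (rule exp_of_nat_mult[symmetric])
  also have "\<dots> = exp (- \<rho> * real k + - \<rho> * real k)" by (rule arg_cong[where f=exp]) (simp add: algebra_simps)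
  also have "\<dots> = exp (- \<rho> * real k) * exp (- \<rho> * real k)" by (rule exp_add)
  finally show ?thesis .
qed

lemma sandwich_norm:
  "opnorm (transpose (matpow M k) ** X ** matpow M k) \<le> opnorm X * \<tau>\<^sup>2 * exp (- 2 * \<rho>) ^ k"
proof -
  have "opnorm (transpose (matpow M k) ** X ** matpow M k)
      \<le> opnorm (transpose (matpow M k) ** X) * opnorm (matpow M k)" by (rule opnorm_mult)
  also have "\<dots> \<le> (opnorm (matpow M k) * opnorm X) * opnorm (matpow M k)"
    by (rule mult_right_mono[OF _ opnorm_nonneg]) (metis opnorm_mult opnorm_transpose)
  also have "\<dots> \<le> (\<tau> * exp (- \<rho> * real k) * opnorm X) * (\<tau> * exp (- \<rho> * real k))"
    by (intro mult_mono Mpow_norm mult_nonneg_nonneg opnorm_nonneg order_refl)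
       (use tau_nonneg in simp)+
  also have "\<dots> = opnorm X * \<tau>\<^sup>2 * exp (- 2 * \<rho>) ^ k"
    unfolding exp_pow by (simp add: power2_eq_square algebra_simps)
  finally show ?thesis .
qed

lemma tail_eq:
  assumes "m \<le> n"
  shows "P - (\<Sum>k<m. transpose (matpow M k) ** Q ** matpow M k)
       = (\<Sum>k\<in>{m..<n}. transpose (matpow M k) ** Q ** matpow M k) + transpose (matpow M n) ** P ** matpow M n"
proof -
  let ?T = "\<lambda>k. transpose (matpow M k) ** Q ** matpow M k"
  have "(\<Sum>k<n. ?T k) = (\<Sum>k<m. ?T k) + (\<Sum>k\<in>{m..<n}. ?T k)"
    using assms by (simp add: lessThan_atLeast0 sum.atLeastLessThan_concat)
  then show ?thesis using lyap_iter[of n] by (simp add: algebra_simps)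
qed

lemma tail_bound:
  "opnorm (P - (\<Sum>k<m. transpose (matpow M k) ** Q ** matpow M k))
     \<le> opnorm Q * \<tau>\<^sup>2 * exp (- 2 * \<rho>) ^ m / (1 - exp (- 2 * \<rho>))"
proof -
  let ?T = "\<lambda>k. transpose (matpow M k) ** Q ** matpow M k"
  let ?q = "exp (- 2 * \<rho>)"
  let ?x = "opnorm (P - (\<Sum>k<m. ?T k))"
  let ?a = "opnorm Q * \<tau>\<^sup>2 * ?q ^ m / (1 - ?q)"
  have q0: "0 \<le> ?q" and q1: "?q < 1" using rho by auto
  have bnd: "?x \<le> ?a + (opnorm P * \<tau>\<^sup>2) * ?q ^ n" if "n \<ge> m" for n
  proof -
    have "?x \<le> opnorm (\<Sum>k\<in>{m..<n}. ?T k) + opnorm (transpose (matpow M n) ** P ** matpow M n)"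
      unfolding tail_eq[OF that] by (rule opnorm_add)
    also have "\<dots> \<le> (\<Sum>k\<in>{m..<n}. opnorm Q * \<tau>\<^sup>2 * ?q ^ k) + opnorm P * \<tau>\<^sup>2 * ?q ^ n"
      by (intro add_mono sandwich_norm order_trans[OF opnorm_sum sum_mono]) auto
    also have "(\<Sum>k\<in>{m..<n}. opnorm Q * \<tau>\<^sup>2 * ?q ^ k) = opnorm Q * \<tau>\<^sup>2 * (\<Sum>k\<in>{m..<n}. ?q ^ k)"
      by (simp add: sum_distrib_left)
    also have "\<dots> \<le> opnorm Q * \<tau>\<^sup>2 * (?q ^ m / (1 - ?q))"
      by (rule mult_left_mono[OF geom_tail_le[OF q0 q1]]) (simp add: opnorm_nonneg)
    finally show ?thesis by simp
  qed
  have "(\<lambda>n. ?q ^ n) \<longlonglongrightarrow> 0" by (rule LIMSEQ_power_zero) (use q0 q1 in simp)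
  then have lim: "(\<lambda>n. ?a + (opnorm P * \<tau>\<^sup>2) * ?q ^ n) \<longlonglongrightarrow> ?a"
    using rho by (auto intro!: tendsto_eq_intros)
  show ?thesis
    by (rule LIMSEQ_le_const[OF lim]) (use bnd in blast)
qed

end


lemma Tblk:
  fixes Mk S :: "real^'n^'n" and K :: "real^'n^'m" and R :: "real^'m^'m"
    and agx :: "'n \<Rightarrow> 'a" and agu :: "'m \<Rightarrow> 'a"
  shows "blk agx agx (transpose Mk ** (blk agx agx S i i + transpose (blkrow agu K i) ** blk agu agu R i i ** blkrow agu K i) ** Mk) l j
  = transpose (blk agx agx Mk i l) ** blk agx agx S i i ** blk agx agx Mk i j
   + transpose (blk agu agx (K ** Mk) i l) ** blk agu agu R i i ** blk agu agx (K ** Mk) i j"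
  unfolding blk_prj blkrow_prj
  by (simp add: matrix_add_ldistrib matrix_add_rdistrib' matrix_transpose_mul matrix_mul_assoc prj_idem_assoc)

lemma opnorm3: "opnorm (transpose X ** Y ** Z) \<le> opnorm X * opnorm Y * opnorm Z"
proof -
  have "opnorm (transpose X ** Y ** Z) \<le> opnorm (transpose X ** Y) * opnorm Z" by (rule opnorm_mult)
  also have "\<dots> \<le> (opnorm X * opnorm Y) * opnorm Z"
    by (rule mult_right_mono[OF _ opnorm_nonneg]) (metis opnorm_mult opnorm_transpose)
  finally show ?thesis .
qed

lemma opnorm3_le:
  assumes "opnorm X \<le> x" "opnorm Y \<le> y" "opnorm Z \<le> z"
  shows "opnorm (transpose X ** Y ** Z) \<le> x * y * z"
proof -
  have "opnorm X * opnorm Y * opnorm Z \<le> x * y * z"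
    by (intro mult_mono assms mult_nonneg_nonneg opnorm_nonneg)
       (use assms opnorm_nonneg[of X] opnorm_nonneg[of Y] in auto)
  thus ?thesis using opnorm3[of X Y Z] by linarith
qed

lemma geom_le2:
  fixes x :: real assumes "x \<ge> 2" "n \<ge> 1"
  shows "(\<Sum>k<n. x ^ k) \<le> 2 * x ^ (n - 1)"
  using assms(2)
proof (induction n rule: dec_induct)
  case base then show ?case by simp
next
  case (step n)
  have "(\<Sum>k<Suc n. x ^ k) = (\<Sum>k<n. x ^ k) + x ^ n" by simp
  also have "\<dots> \<le> 2 * x ^ (n - 1) + x ^ n" using step.IH by simp
  also have "2 * x ^ (n - 1) \<le> x ^ n"
  proof -
    have "x ^ n = x * x ^ (n - 1)" using step.hyps by (cases n) auto
    thus ?thesis using assms(1) by (simp add: mult_right_mono)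
  qed
  finally show ?case by simp
qed

lemma gp_ident: fixes \<rho> L \<gamma> D :: real assumes "\<rho> > 0" "\<rho> + L > 0"
  shows "((\<rho> * \<gamma> / (\<rho> + L)) * D / (2 * \<rho>)) * (2 * L) = (\<gamma> - \<rho> * \<gamma> / (\<rho> + L)) * D"
proof -
  have n: "\<rho> + L \<noteq> 0" "\<rho> \<noteq> 0" using assms by auto
  have a: "\<gamma> - \<rho> * \<gamma> / (\<rho> + L) = \<gamma> * L / (\<rho> + L)" using n by (simp add: field_simps)
  have b: "((\<rho> * \<gamma> / (\<rho> + L)) * D / (2 * \<rho>)) * (2 * L) = ((2 * \<rho>) * (\<gamma> * L * D)) / ((2 * \<rho>) * (\<rho> + L))"
    by (simp add: algebra_simps)
  also have "\<dots> = (\<gamma> * L * D) / (\<rho> + L)" using n by (rule_tac mult_divide_mult_cancel_left) simp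
  finally show ?thesis using a by simp
qed

lemma card_ge2: "(x::'a::finite) \<noteq> y \<Longrightarrow> 2 \<le> CARD('a)"
proof -
  assume "x \<noteq> y"
  hence "card {x, y} = 2" by simp
  moreover have "card {x, y} \<le> CARD('a)" by (rule card_mono) auto
  ultimately show ?thesis by simp
qed



context
  fixes d :: "'a::finite \<Rightarrow> 'a \<Rightarrow> nat"
    and agx :: "'n::finite \<Rightarrow> 'a" and agu :: "'m::finite \<Rightarrow> 'a"
    and A :: "real^'n^'n" and B :: "real^'m^'n" and K :: "real^'n^'m"
    and S :: "real^'n^'n" and R :: "real^'m^'m" and P :: "real^'n^'n"
    and \<gamma> cA cB cK \<tau> \<rho> cP \<gamma>P :: real and i :: 'a
  assumes d_refl: "\<And>x. d x x = 0"
    and tri: "\<And>x y z. d x z \<le> d x y + d y z"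
    and g: "0 < \<gamma>"
    and A_SED: "SED d agx agx cA \<gamma> A" and cA: "cA \<ge> 1"
    and B_SED: "SED d agx agu cB \<gamma> B" and cB: "cB \<ge> 0"
    and K_SED: "SED d agu agx cK \<gamma> K" and cK: "cK \<ge> 0"
    and rho: "\<rho> > 0"
    and stab: "stable \<tau> \<rho> (A + B ** K)"
    and lyap: "P = blk agx agx S i i
                   + transpose (blkrow agu K i) ** blk agu agu R i i ** blkrow agu K i
                   + transpose (A + B ** K) ** P ** (A + B ** K)"
    and cP_eq: "cP = opnorm (blk agx agx S i i + transpose (blkrow agu K i) ** blk agu agu R i i ** blkrow agu K i) * \<tau>\<^sup>2
                    / (1 - exp (- 2 * \<rho>))
                 + 2 * (opnorm (blk agx agx S i i) + opnorm (blk agu agu R i i) * cK\<^sup>2)"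
    and \<gamma>P_eq: "\<gamma>P = \<rho> * \<gamma> / (\<rho> + ln (real CARD('a) * cA + (real CARD('a))\<^sup>2 * cB * cK))"
begin

lemma CC_eq: "real CARD('a) * cA + (real CARD('a))\<^sup>2 * cB * cK = real CARD('a) * (cA + real CARD('a) * cB * cK)"
  by (simp add: power2_eq_square algebra_simps)

lemma L_nonneg: "0 \<le> ln (real CARD('a) * (cA + real CARD('a) * cB * cK))"
  using CC_ge[OF d_refl tri _ A_SED cA B_SED cB K_SED cK] g by simp

lemma gP_nonneg: "0 \<le> \<gamma>P"
  unfolding \<gamma>P_eq CC_eq using L_nonneg rho g by simp

lemma gP_le: "\<gamma>P \<le> \<gamma>"
proof -
  let ?L = "ln (real CARD('a) * (cA + real CARD('a) * cB * cK))"
  have "\<rho> * \<gamma> \<le> \<gamma> * (\<rho> + ?L)" using L_nonneg g by (simp add: algebra_simps)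
  thus ?thesis unfolding \<gamma>P_eq CC_eq using L_nonneg rho by (simp add: divide_le_eq)
qed

lemma cP_nonneg: "0 \<le> cP"
  unfolding cP_eq using rho by (intro add_nonneg_nonneg divide_nonneg_nonneg mult_nonneg_nonneg)
     (auto simp: opnorm_nonneg)

lemma P_SED: "opnorm (blk agx agx P l j) \<le> cP * exp (- \<gamma>P * real (max (d i l) (d i j)))"
proof -
  let ?M = "A + B ** K"
  let ?Si = "blk agx agx S i i" and ?Ri = "blk agu agu R i i"
  let ?Q = "?Si + transpose (blkrow agu K i) ** ?Ri ** blkrow agu K i"
  let ?T = "\<lambda>k. transpose (matpow ?M k) ** ?Q ** matpow ?M k"
  let ?C = "real CARD('a) * (cA + real CARD('a) * cB * cK)"
  let ?L = "ln ?C"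
  let ?D = "real (max (d i l) (d i j))"
  let ?q = "exp (- 2 * \<rho>)"
  let ?s = "opnorm ?Si + opnorm ?Ri * cK\<^sup>2"
  let ?E = "exp (- \<gamma> * real (d i l)) * exp (- \<gamma> * real (d i j))"
  define k0 where "k0 = nat \<lceil>\<gamma>P * ?D / (2 * \<rho>)\<rceil>"
  have C1: "?C \<ge> 1" using CC_ge[OF d_refl tri _ A_SED cA B_SED cB K_SED cK] g by simp
  have lyap': "P = ?Q + transpose ?M ** P ** ?M" using lyap by simp
  have x0: "0 \<le> \<gamma>P * ?D / (2 * \<rho>)" using gP_nonneg rho by simp
  have rk0: "real k0 = of_int \<lceil>\<gamma>P * ?D / (2 * \<rho>)\<rceil>" unfolding k0_def using x0 by simp
  have k0a: "\<gamma>P * ?D \<le> 2 * \<rho> * real k0"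
  proof -
    have "\<gamma>P * ?D / (2 * \<rho>) \<le> real k0" unfolding rk0 by (rule le_of_int_ceiling)
    thus ?thesis using rho by (simp add: divide_le_eq mult.commute)
  qed
  have k0b: "real k0 - 1 < \<gamma>P * ?D / (2 * \<rho>)"
  proof -
    show ?thesis unfolding rk0 by (metis ceiling_correct)
  qed
  have E_le: "?E \<le> exp (- \<gamma> * ?D)"
  proof -
    have "\<gamma> * ?D \<le> \<gamma> * (real (d i l) + real (d i j))" using g by (intro mult_left_mono) auto
    thus ?thesis by (simp add: exp_add[symmetric] algebra_simps)
  qed
  have dec: "blk agx agx P l j = (\<Sum>k<k0. blk agx agx (?T k) l j)
        + blk agx agx (P - (\<Sum>k<k0. ?T k)) l j"
    by (simp add: blk_sum[symmetric] blk_add[symmetric])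
  have Tb: "opnorm (blk agx agx (?T k) l j) \<le> ?s * (?C\<^sup>2) ^ k * ?E" for k
  proof -
    have "opnorm (blk agx agx (?T k) l j)
       \<le> opnorm (transpose (blk agx agx (matpow ?M k) i l) ** ?Si ** blk agx agx (matpow ?M k) i j)
        + opnorm (transpose (blk agu agx (K ** matpow ?M k) i l) ** ?Ri ** blk agu agx (K ** matpow ?M k) i j)"
      unfolding Tblk by (rule opnorm_add)
    also have "\<dots> \<le> (?C ^ k * exp (- \<gamma> * real (d i l))) * opnorm ?Si * (?C ^ k * exp (- \<gamma> * real (d i j)))
        + (cK * ?C ^ k * exp (- \<gamma> * real (d i l))) * opnorm ?Ri * (cK * ?C ^ k * exp (- \<gamma> * real (d i j)))"
      by (intro add_mono opnorm3_le order_refl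
          Mpow_blk[OF d_refl tri _ A_SED cA B_SED cB K_SED cK]
          KMpow_blk[OF d_refl tri _ A_SED cA B_SED cB K_SED cK]) (use g in auto)
    also have "\<dots> = ?s * (?C\<^sup>2) ^ k * ?E"
    proof -
      have pk: "(?C\<^sup>2) ^ k = ?C ^ k * ?C ^ k" by (simp add: power2_eq_square power_mult_distrib)
      show ?thesis unfolding pk by (simp add: power2_eq_square algebra_simps)
    qed
    finally show ?thesis .
  qed
  have part1: "(\<Sum>k<k0. opnorm (blk agx agx (?T k) l j)) \<le> 2 * ?s * exp (- \<gamma>P * ?D)"
  proof (cases "k0 = 0")
    case True then show ?thesis by (simp add: opnorm_nonneg)
  next
    case False
    hence k1: "k0 \<ge> 1" by simp
    have "?D > 0"
    proof (rule ccontr)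
      assume "\<not> ?D > 0" hence "?D = 0" by simp
      hence "k0 = 0" unfolding k0_def by simp
      thus False using False by simp
    qed
    hence "l \<noteq> i \<or> j \<noteq> i" using d_refl by (auto simp: max_def split: if_splits)
    hence card2: "real CARD('a) \<ge> 2" using card_ge2 by fastforce
    have cM1: "cA + real CARD('a) * cB * cK \<ge> 1" by (rule cM_ge[OF d_refl tri _ A_SED cA B_SED cB K_SED cK]) (use g in simp)
    have "2 * 1 \<le> ?C" by (rule mult_mono[OF card2 cM1]) auto
    hence C2: "?C \<ge> 2" by simp
    have "2 * 1 \<le> ?C * ?C" by (rule mult_mono) (use C2 in auto)
    hence C2sq: "?C\<^sup>2 \<ge> 2" by (simp add: power2_eq_square)
    have s0: "0 \<le> ?s" by (simp add: opnorm_nonneg)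
    have E0: "0 \<le> ?E" by simp
    have "(\<Sum>k<k0. opnorm (blk agx agx (?T k) l j)) \<le> (\<Sum>k<k0. ?s * ?E * (?C\<^sup>2) ^ k)"
      using Tb by (intro sum_mono) (simp add: algebra_simps)
    also have "\<dots> = ?s * ?E * (\<Sum>k<k0. (?C\<^sup>2) ^ k)" by (simp add: sum_distrib_left)
    also have "\<dots> \<le> ?s * ?E * (2 * (?C\<^sup>2) ^ (k0 - 1))"
      by (rule mult_left_mono[OF geom_le2[OF C2sq k1]]) (use s0 E0 in simp)
    also have "\<dots> = 2 * ?s * ((?C\<^sup>2) ^ (k0 - 1) * ?E)" by (simp add: algebra_simps)
    also have "(?C\<^sup>2) ^ (k0 - 1) * ?E \<le> exp (- \<gamma>P * ?D)"
    proof -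
      have Cpos: "?C > 0" using C1 by simp
      have "exp (2 * ?L) = exp (?L + ?L)" by (rule arg_cong[where f=exp]) simp
      also have "\<dots> = exp ?L * exp ?L" by (rule exp_add)
      also have "\<dots> = ?C\<^sup>2" using Cpos by (simp add: power2_eq_square)
      finally have eL: "exp (2 * ?L) = ?C\<^sup>2" .
      have "(?C\<^sup>2) ^ (k0 - 1) = exp (2 * ?L) ^ (k0 - 1)" by (simp only: eL)
      also have "\<dots> = exp (real (k0 - 1) * (2 * ?L))" by (rule exp_of_nat_mult[symmetric])
      also have "real (k0 - 1) = real k0 - 1" using k1 by simp
      finally have e1: "(?C\<^sup>2) ^ (k0 - 1) = exp ((real k0 - 1) * (2 * ?L))" .
      have "(real k0 - 1) * (2 * ?L) \<le> (\<gamma>P * ?D / (2 * \<rho>)) * (2 * ?L)"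
        by (rule mult_right_mono) (use k0b L_nonneg in auto)
      also have "\<dots> = (\<gamma> - \<gamma>P) * ?D"
      proof -
        have "\<rho> + ?L > 0" using rho L_nonneg by simp
        thus ?thesis unfolding \<gamma>P_eq CC_eq using rho by (rule_tac gp_ident) auto
      qed
      finally have ex: "(real k0 - 1) * (2 * ?L) \<le> (\<gamma> - \<gamma>P) * ?D" .
      have "(?C\<^sup>2) ^ (k0 - 1) * ?E \<le> exp ((\<gamma> - \<gamma>P) * ?D) * exp (- \<gamma> * ?D)"
        unfolding e1 by (intro mult_mono E_le) (use ex in auto)
      also have "\<dots> = exp (- \<gamma>P * ?D)" by (simp add: exp_add[symmetric] algebra_simps)
      finally show ?thesis .
    qed
    then have "2 * ?s * ((?C\<^sup>2) ^ (k0 - 1) * ?E) \<le> 2 * ?s * exp (- \<gamma>P * ?D)"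
      by (rule mult_left_mono) (use s0 in simp)
    finally show ?thesis .
  qed
  have part2: "opnorm (blk agx agx (P - (\<Sum>k<k0. ?T k)) l j)
      \<le> opnorm ?Q * \<tau>\<^sup>2 / (1 - ?q) * exp (- \<gamma>P * ?D)"
  proof -
    have "opnorm (blk agx agx (P - (\<Sum>k<k0. ?T k)) l j) \<le> opnorm (P - (\<Sum>k<k0. ?T k))"
      by (rule opnorm_blk)
    also have "\<dots> \<le> opnorm ?Q * \<tau>\<^sup>2 * ?q ^ k0 / (1 - ?q)"
      by (rule tail_bound[OF lyap' stab rho])
    also have "\<dots> = opnorm ?Q * \<tau>\<^sup>2 / (1 - ?q) * ?q ^ k0" by simp
    also have "\<dots> \<le> opnorm ?Q * \<tau>\<^sup>2 / (1 - ?q) * exp (- \<gamma>P * ?D)"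
    proof (rule mult_left_mono)
      have "?q ^ k0 = exp (real k0 * (- 2 * \<rho>))" by (rule exp_of_nat_mult[symmetric])
      also have "\<dots> \<le> exp (- \<gamma>P * ?D)" using k0a by (simp add: algebra_simps)
      finally show "?q ^ k0 \<le> exp (- \<gamma>P * ?D)" .
      show "0 \<le> opnorm ?Q * \<tau>\<^sup>2 / (1 - ?q)" using rho by (simp add: opnorm_nonneg)
    qed
    finally show ?thesis .
  qed
  have "opnorm (blk agx agx P l j) \<le> (\<Sum>k<k0. opnorm (blk agx agx (?T k) l j))
        + opnorm (blk agx agx (P - (\<Sum>k<k0. ?T k)) l j)"
    by (subst dec) (rule order_trans[OF opnorm_add add_mono[OF opnorm_sum order_refl]], simp)
  also have "\<dots> \<le> 2 * ?s * exp (- \<gamma>P * ?D) + opnorm ?Q * \<tau>\<^sup>2 / (1 - ?q) * exp (- \<gamma>P * ?D)"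
    by (rule add_mono[OF part1 part2])
  also have "\<dots> = cP * exp (- \<gamma>P * ?D)" unfolding cP_eq by (simp add: algebra_simps)
  finally show ?thesis .
qed

end


lemma exp3:
  assumes tri: "\<And>x y z. d x z \<le> d x y + d y z" and gP: "0 \<le> \<gamma>P" "\<gamma>P \<le> \<gamma>"
  shows "exp (- \<gamma> * real (d p l)) * exp (- \<gamma>P * real (max (d i p) (d i q))) * exp (- \<gamma> * real (d q j))
     \<le> exp (- \<gamma>P * real (max (d i l) (d i j)))"
proof -
  have h: "real (max (d i l) (d i j)) \<le> real (d p l) + real (max (d i p) (d i q)) + real (d q j)"
    using tri[of i l p] tri[of i j q] by (simp add: max_def)
  have "\<gamma>P * real (max (d i l) (d i j)) \<le> \<gamma>P * (real (d p l) + real (max (d i p) (d i q)) + real (d q j))"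
    by (rule mult_left_mono[OF h gP(1)])
  also have "\<dots> \<le> \<gamma> * real (d p l) + \<gamma>P * real (max (d i p) (d i q)) + \<gamma> * real (d q j)"
    using gP by (simp add: distrib_left add_mono mult_right_mono)
  finally show ?thesis by (simp add: exp_add[symmetric] algebra_simps)
qed

lemma H_blk:
  fixes d :: "'a::finite \<Rightarrow> 'a \<Rightarrow> nat" and rx :: "'r::finite \<Rightarrow> 'a"
    and ra :: "'c1::finite \<Rightarrow> 'a" and rb :: "'c2::finite \<Rightarrow> 'a"
    and X :: "real^'c1^'r" and Pm :: "real^'r^'r" and Z :: "real^'c2^'r"
  assumes tri: "\<And>x y z. d x z \<le> d x y + d y z" and gP: "0 \<le> \<gamma>P" "\<gamma>P \<le> \<gamma>"
    and XS: "SED d rx ra cX \<gamma> X" and ZS: "SED d rx rb cZ \<gamma> Z"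
    and cX: "0 \<le> cX" and cZ: "0 \<le> cZ" and cP: "0 \<le> cP"
    and Pb: "\<And>p q. opnorm (blk rx rx Pm p q) \<le> cP * exp (- \<gamma>P * real (max (d i p) (d i q)))"
  shows "opnorm (blk ra rb (transpose X ** Pm ** Z) l j)
     \<le> (real CARD('a))\<^sup>2 * cX * cZ * cP * exp (- \<gamma>P * real (max (d i l) (d i j)))"
proof -
  let ?e = "exp (- \<gamma>P * real (max (d i l) (d i j)))"
  have eq: "blk ra rb (transpose X ** Pm ** Z) l j
      = (\<Sum>q\<in>UNIV. \<Sum>p\<in>UNIV. transpose (blk rx ra X p l) ** blk rx rx Pm p q ** blk rx rb Z q j)"
    by (simp add: blk_mult[where mb=rx] blk_transpose matrix_sum_right)
  have "opnorm (blk ra rb (transpose X ** Pm ** Z) l j)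
      \<le> (\<Sum>q\<in>UNIV. \<Sum>p\<in>UNIV. opnorm (transpose (blk rx ra X p l) ** blk rx rx Pm p q ** blk rx rb Z q j))"
    unfolding eq by (rule order_trans[OF opnorm_sum sum_mono[OF opnorm_sum]]) auto
  also have "\<dots> \<le> real CARD('a) * (real CARD('a) * (cX * cP * cZ * ?e))"
  proof (rule sum_const_le_card, rule sum_const_le_card)
    fix p q
    have "opnorm (transpose (blk rx ra X p l) ** blk rx rx Pm p q ** blk rx rb Z q j)
       \<le> (cX * exp (- \<gamma> * real (d p l))) * (cP * exp (- \<gamma>P * real (max (d i p) (d i q))))
         * (cZ * exp (- \<gamma> * real (d q j)))"
      by (rule opnorm3_le[OF SED_D[OF XS] Pb SED_D[OF ZS]])
    also have "\<dots> = cX * cP * cZ * (exp (- \<gamma> * real (d p l)) * exp (- \<gamma>P * real (max (d i p) (d i q)))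
         * exp (- \<gamma> * real (d q j)))" by (simp add: algebra_simps)
    also have "\<dots> \<le> cX * cP * cZ * ?e"
      by (rule mult_left_mono[OF exp3[OF tri gP]]) (use cX cP cZ in simp)
    finally show "opnorm (transpose (blk rx ra X p l) ** blk rx rx Pm p q ** blk rx rb Z q j) \<le> cX * cP * cZ * ?e" .
  qed
  also have "\<dots> = (real CARD('a))\<^sup>2 * cX * cZ * cP * ?e" by (simp add: power2_eq_square algebra_simps)
  finally show ?thesis .
qed

lemma blk_blk_diag: "opnorm (blk ag ag (blk ag ag S i i) l j) \<le> opnorm (blk ag ag S i i) * exp (- \<gamma>P * real (max (d i l) (d i j)))"
  if "\<And>x. d x x = 0"
proof (cases "l = i \<and> j = i")
  case True
  have "blk ag ag (blk ag ag S i i) l j = blk ag ag S i i" using True by (simp add: blk_def vec_eq_iff)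
  thus ?thesis using True that by simp
next
  case False
  have "blk ag ag (blk ag ag S i i) l j = 0" using False by (auto simp: blk_def vec_eq_iff)
  thus ?thesis by (simp add: opnorm_nonneg)
qed



theorem corollary1:
  fixes d :: "'a::finite \<Rightarrow> 'a \<Rightarrow> nat"
    and agx :: "'n::finite \<Rightarrow> 'a" and agu :: "'m::finite \<Rightarrow> 'a"
    and A :: "real^'n^'n" and B :: "real^'m^'n" and K :: "real^'n^'m"
    and S :: "real^'n^'n" and R :: "real^'m^'m" and P :: "real^'n^'n"
    and \<gamma>sys cA cB cK \<tau> \<rho> :: real and \<kappa> :: nat and i :: 'a
  assumes d_refl: "\<And>x. d x x = 0"
    and d_sym: "\<And>x y. d x y = d y x"
    and d_tri: "\<And>x y z. d x z \<le> d x y + d y z"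
    and \<gamma>sys_pos: "\<gamma>sys > 0" and \<kappa>_ge: "\<kappa> \<ge> 1"
    and A_SED: "SED d agx agx cA \<gamma>sys A" and cA_ge: "cA \<ge> 1"
    and B_SED: "SED d agx agu cB \<gamma>sys B" and cB_ge: "cB \<ge> 1"
    and K_sparse: "in_Kkappa d agu agx \<kappa> K"
    and K_SED: "SED d agu agx cK \<gamma>sys K"
    and \<rho>_pos: "\<rho> > 0"
    and stab: "stable \<tau> \<rho> (A + B ** K)"
    and S_bd: "block_diag agx S" and S_psd: "\<And>j. block_psd agx S j"
    and R_bd: "block_diag agu R" and R_pd: "\<And>j. block_pd agu R j"
    and lyap: "P = blk agx agx S i i
                   + transpose (blkrow agu K i) ** blk agu agu R i i ** blkrow agu K i
                   + transpose (A + B ** K) ** P ** (A + B ** K)"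
  defines "N \<equiv> real CARD('a)"
    and "Si \<equiv> blk agx agx S i i"
    and "Ri \<equiv> blk agu agu R i i"
  defines "cP \<equiv> opnorm (Si + transpose (blkrow agu K i) ** Ri ** blkrow agu K i) * \<tau>\<^sup>2
                    / (1 - exp (- 2 * \<rho>))
                 + 2 * (opnorm Si + opnorm Ri * cK\<^sup>2)"
    and "\<gamma>P \<equiv> \<rho> * \<gamma>sys / (\<rho> + ln (N * cA + N\<^sup>2 * cB * cK))"
  defines "cH \<equiv> max (opnorm Si + N\<^sup>2 * cA\<^sup>2 * cP)
                   (max (N\<^sup>2 * cA * cB * cP) (opnorm Ri + N\<^sup>2 * cB\<^sup>2 * cP))"
  shows "SED_away d agx agx i cH \<gamma>P (Si + transpose A ** P ** A)
       \<and> SED_away d agx agu i cH \<gamma>P (transpose A ** P ** B)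
       \<and> SED_away d agu agu i cH \<gamma>P (Ri + transpose B ** P ** B)"
proof -
  have cB0: "0 \<le> cB" using cB_ge by simp
  have cK0: "0 \<le> cK"
  proof -
    have "0 \<le> cK * exp (- \<gamma>sys * real (d undefined undefined))"
      by (rule order_trans[OF opnorm_nonneg SED_D[OF K_SED]])
    thus ?thesis by (simp add: zero_le_mult_iff)
  qed
  have cPe: "cP = opnorm (blk agx agx S i i + transpose (blkrow agu K i) ** blk agu agu R i i ** blkrow agu K i) * \<tau>\<^sup>2
                    / (1 - exp (- 2 * \<rho>))
                 + 2 * (opnorm (blk agx agx S i i) + opnorm (blk agu agu R i i) * cK\<^sup>2)"
    unfolding cP_def Si_def Ri_def ..
  have gPe: "\<gamma>P = \<rho> * \<gamma>sys / (\<rho> + ln (real CARD('a) * cA + (real CARD('a))\<^sup>2 * cB * cK))"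
    unfolding \<gamma>P_def N_def ..
  note facts = d_refl d_tri \<gamma>sys_pos A_SED cA_ge B_SED cB0 K_SED cK0 \<rho>_pos stab lyap cPe gPe
  have PS: "\<And>p q. opnorm (blk agx agx P p q) \<le> cP * exp (- \<gamma>P * real (max (d i p) (d i q)))"
    by (rule P_SED[OF facts])
  have gP0: "0 \<le> \<gamma>P" by (rule gP_nonneg[OF facts])
  have gPle: "\<gamma>P \<le> \<gamma>sys" by (rule gP_le[OF facts])
  have cP0: "0 \<le> cP" by (rule cP_nonneg[OF facts])
  have cA0: "0 \<le> cA" using cA_ge by simp
  have N2: "(real CARD('a))\<^sup>2 = N\<^sup>2" unfolding N_def ..
  have H1: "SED_away d agx agx i cH \<gamma>P (Si + transpose A ** P ** A)"
    unfolding SED_away_def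
  proof (intro allI)
    fix l j
    let ?e = "exp (- \<gamma>P * real (max (d i l) (d i j)))"
    have "opnorm (blk agx agx (Si + transpose A ** P ** A) l j)
        \<le> opnorm Si * ?e + N\<^sup>2 * cA * cA * cP * ?e"
      unfolding blk_add
      by (rule order_trans[OF opnorm_add add_mono], unfold Si_def,
          rule blk_blk_diag[OF d_refl],
          rule H_blk[OF d_tri gP0 gPle A_SED A_SED cA0 cA0 cP0 PS, unfolded N2])
    also have "\<dots> = (opnorm Si + N\<^sup>2 * cA\<^sup>2 * cP) * ?e" by (simp add: power2_eq_square algebra_simps)
    also have "\<dots> \<le> cH * ?e" unfolding cH_def by (rule mult_right_mono) auto
    finally show "opnorm (blk agx agx (Si + transpose A ** P ** A) l j) \<le> cH * ?e" .
  qed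
  have H2: "SED_away d agx agu i cH \<gamma>P (transpose A ** P ** B)"
    unfolding SED_away_def
  proof (intro allI)
    fix l j
    let ?e = "exp (- \<gamma>P * real (max (d i l) (d i j)))"
    have "opnorm (blk agx agu (transpose A ** P ** B) l j) \<le> N\<^sup>2 * cA * cB * cP * ?e"
      by (rule H_blk[OF d_tri gP0 gPle A_SED B_SED cA0 cB0 cP0 PS, unfolded N2])
    also have "\<dots> \<le> cH * ?e" unfolding cH_def by (rule mult_right_mono) auto
    finally show "opnorm (blk agx agu (transpose A ** P ** B) l j) \<le> cH * ?e" .
  qed
  have H3: "SED_away d agu agu i cH \<gamma>P (Ri + transpose B ** P ** B)"
    unfolding SED_away_def
  proof (intro allI)
    fix l j
    let ?e = "exp (- \<gamma>P * real (max (d i l) (d i j)))"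
    have "opnorm (blk agu agu (Ri + transpose B ** P ** B) l j)
        \<le> opnorm Ri * ?e + N\<^sup>2 * cB * cB * cP * ?e"
      unfolding blk_add
      by (rule order_trans[OF opnorm_add add_mono], unfold Ri_def,
          rule blk_blk_diag[OF d_refl],
          rule H_blk[OF d_tri gP0 gPle B_SED B_SED cB0 cB0 cP0 PS, unfolded N2])
    also have "\<dots> = (opnorm Ri + N\<^sup>2 * cB\<^sup>2 * cP) * ?e" by (simp add: power2_eq_square algebra_simps)
    also have "\<dots> \<le> cH * ?e" unfolding cH_def by (rule mult_right_mono) auto
    finally show "opnorm (blk agu agu (Ri + transpose B ** P ** B) l j) \<le> cH * ?e" .
  qed
  show ?thesis using H1 H2 H3 by blast
qed


end
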